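(* Assume $\phi$ is $\alpha$-Lipschitz for some $0<\alpha<\infty$, $h$ is locally integrable and locally bounded, and $\alpha\int_0^T|h(t)|dt<1$. Then $$\limsup_{K\to\infty}\limsup_{\epsilon\to0}\epsilon\log\mathbb{P}(Z^\epsilon_T\ge K)=-\infty.$$
   Context: Let $\phi:\mathbb{R}\to[0,\infty)$ and $h:[0,\infty)\to\mathbb{R}$, $T>0$ fixed. For $\epsilon>0$, let $N^\epsilon$ be the simple point process on $[0,\infty)$ with empty past, $N^\epsilon_t$ the number of points in $(0,t]$, defined as the unique strong solution of $N^\epsilon_t=\int_0^t\int_0^\infty \mathbf{1}\{z\le \frac1\epsilon\phi(\int_0^{s-}\epsilon h(s-u)dN^\epsilon_u)\}\pi(dz\,ds)$, where $\pi$ is a Poisson random measure on $[0,\infty)^2$ with intensity $dz\,ds$. Set $Z^\epsilon_t:=\epsilon N^\epsilon_t$. *)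

theory Defs
  imports "HOL-Probability.Probability"
begin

text \<open>Poisson random measure on the quadrant [0,oo)^2 with intensity Lebesgue measure
  dz ds, realised as a random (simple) point set.  For a Borel set A of finite
  Lebesgue measure, pi(A) = card (P w \<inter> A).\<close>

definition poisson_random_measure ::
  "'a measure \<Rightarrow> ('a \<Rightarrow> (real \<times> real) set) \<Rightarrow> bool" where
  "poisson_random_measure M P \<longleftrightarrow>
     prob_space M \<and>
     (\<forall>w \<in> space M. P w \<subseteq> {0..} \<times> {0..}) \<and>
     (\<forall>A. A \<in> sets lborel \<and> A \<subseteq> {0..} \<times> {0..} \<and> emeasure lborel A < \<infinity> \<longrightarrow>
        (\<lambda>w. card (P w \<inter> A)) \<in> measurable M (count_space UNIV) \<and>
        (AE w in M. finite (P w \<inter> A)) \<and>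
        (\<forall>k::nat. measure M {w \<in> space M. card (P w \<inter> A) = k}
            = measure lborel A ^ k / fact k * exp (- measure lborel A))) \<and>
     (\<forall>(n::nat) (A :: nat \<Rightarrow> (real \<times> real) set).
        (\<forall>i<n. A i \<in> sets lborel \<and> A i \<subseteq> {0..} \<times> {0..} \<and> emeasure lborel (A i) < \<infinity>) \<and>
        disjoint_family_on A {..<n} \<longrightarrow>
        prob_space.indep_vars M (\<lambda>i. count_space UNIV) (\<lambda>i w. card (P w \<inter> A i)) {..<n})"

text \<open>The past integral  int_0^{s-} g(u) dN_u  of a counting path N (N t = number of
  points in (0,t], N t = 0 for t \<le> 0), as Lebesgue-Stieltjes integral.\<close>

definition past_integral :: "(real \<Rightarrow> nat) \<Rightarrow> (real \<Rightarrow> real) \<Rightarrow> real \<Rightarrow> real" where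
  "past_integral N g s = (LINT u:{0<..<s}|interval_measure (\<lambda>u. real (N u)). g u)"

definition accepted :: "(real \<Rightarrow> real) \<Rightarrow> (real \<Rightarrow> real) \<Rightarrow> real \<Rightarrow>
    (real \<times> real) set \<Rightarrow> (real \<Rightarrow> nat) \<Rightarrow> real \<Rightarrow> (real \<times> real) set" where
  "accepted \<phi> h \<epsilon> Pw N t =
     {(s, z) \<in> Pw. 0 < s \<and> s \<le> t \<and>
        z \<le> (1 / \<epsilon>) * \<phi> (past_integral N (\<lambda>u. \<epsilon> * h (s - u)) s)}"

text \<open>N is a (strong) solution of
  N_t = int_0^t int_0^oo 1{z \<le> phi(int_0^{s-} eps h(s-u) dN_u)/eps} pi(dz ds).
  N w t is the number of points in (0,t]; the equation is imposed for all real t,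
  which forces N w t = 0 for t \<le> 0 (empty past).\<close>

definition hawkes_solution :: "'a measure \<Rightarrow> ('a \<Rightarrow> (real \<times> real) set) \<Rightarrow>
    (real \<Rightarrow> real) \<Rightarrow> (real \<Rightarrow> real) \<Rightarrow> real \<Rightarrow> ('a \<Rightarrow> real \<Rightarrow> nat) \<Rightarrow> bool" where
  "hawkes_solution M P \<phi> h \<epsilon> N \<longleftrightarrow>
     (\<forall>t. (\<lambda>w. N w t) \<in> measurable M (count_space UNIV)) \<and>
     (AE w in M. \<forall>t. finite (accepted \<phi> h \<epsilon> (P w) (N w) t) \<and>
                     N w t = card (accepted \<phi> h \<epsilon> (P w) (N w) t))"

definition eps_log :: "real \<Rightarrow> real \<Rightarrow> ereal" where
  "eps_log \<epsilon> p = (if p = 0 then MInfty else ereal (\<epsilon> * ln p))"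

end

theory Submission
  imports Defs
begin



lemma acc_restrict:
  assumes "t' \<le> t"
  shows "accepted \<phi> h \<epsilon> Pw F t' = {p \<in> accepted \<phi> h \<epsilon> Pw F t. fst p \<le> t'}"
  using assms unfolding accepted_def by auto

lemma acc_mono:
  assumes "t' \<le> t"
  shows "accepted \<phi> h \<epsilon> Pw F t' \<subseteq> accepted \<phi> h \<epsilon> Pw F t"
  using acc_restrict[OF assms] by auto

lemma acc_nonpos:
  assumes "t \<le> 0"
  shows "accepted \<phi> h \<epsilon> Pw F t = {}"
  using assms unfolding accepted_def by auto

lemma set_int_bound:
  fixes g :: "real \<Rightarrow> real"
  assumes S: "S \<in> sets M" and fin: "emeasure M S < \<infinity>" and B: "0 \<le> B"
    and gb: "\<And>u. u \<in> S \<Longrightarrow> \<bar>g u\<bar> \<le> B"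
  shows "\<bar>set_lebesgue_integral M S g\<bar> \<le> B * measure M S"
proof (cases "integrable M (\<lambda>x. indicator S x *\<^sub>R g x)")
  case True
  have i2: "integrable M (\<lambda>x. indicator S x *\<^sub>R B)"
    using S fin by (intro integrableI_bounded_set_indicator) auto
  have "norm (integral\<^sup>L M (\<lambda>x. indicator S x *\<^sub>R g x)) \<le> integral\<^sup>L M (\<lambda>x. indicator S x *\<^sub>R B)"
    using gb by (intro Bochner_Integration.integral_norm_bound_integral[OF True i2]) (auto simp: indicator_def)
  also have "\<dots> = B * measure M S"
    using sets.Int_space_eq2[OF S] by (simp add: mult.commute)
  finally show ?thesis by (simp add: set_lebesgue_integral_def)
next
  case False
  thus ?thesis using B by (simp add: set_lebesgue_integral_def not_integrable_integral_eq)
qed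

lemma past_integral_bound:
  fixes F :: "real \<Rightarrow> nat"
  assumes mono: "\<And>x y. x \<le> y \<Longrightarrow> F x \<le> F y"
    and rc: "\<And>a. continuous (at_right a) (\<lambda>u. real (F u))"
    and F0: "F 0 = 0" and s: "0 < s" and B: "0 \<le> B"
    and gb: "\<And>u. u \<in> {0<..<s} \<Longrightarrow> \<bar>g u\<bar> \<le> B"
  shows "\<bar>past_integral F g s\<bar> \<le> B * real (F s)"
proof -
  let ?\<mu> = "interval_measure (\<lambda>u. real (F u))"
  have e1: "emeasure ?\<mu> {0<..s} = real (F s) - real (F 0)"
    using s mono rc by (intro emeasure_interval_measure_Ioc) auto
  have e2: "emeasure ?\<mu> {0<..<s} \<le> emeasure ?\<mu> {0<..s}"
    by (intro emeasure_mono) auto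
  have fin: "emeasure ?\<mu> {0<..<s} < \<infinity>"
    using e1 e2 by (auto simp: less_top[symmetric] top_unique)
  have m: "measure ?\<mu> {0<..<s} \<le> real (F s)"
  proof -
    have "measure ?\<mu> {0<..<s} = enn2real (emeasure ?\<mu> {0<..<s})" by (simp add: measure_def)
    also have "\<dots> \<le> enn2real (emeasure ?\<mu> {0<..s})"
      using e2 e1 by (intro enn2real_mono) auto
    also have "\<dots> = real (F s)" using e1 F0 by simp
    finally show ?thesis .
  qed
  have "\<bar>past_integral F g s\<bar> \<le> B * measure ?\<mu> {0<..<s}"
    unfolding past_integral_def using fin B gb by (intro set_int_bound) auto
  also have "\<dots> \<le> B * real (F s)" using m B by (intro mult_left_mono)
  finally show ?thesis .
qed

locale good_path =
  fixes \<phi> h :: "real \<Rightarrow> real" and \<epsilon> :: real and Pw :: "(real \<times> real) set" and F :: "real \<Rightarrow> nat"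
  assumes fin: "\<And>t. finite (accepted \<phi> h \<epsilon> Pw F t)"
    and eq: "\<And>t. F t = card (accepted \<phi> h \<epsilon> Pw F t)"
begin

abbreviation "acc \<equiv> accepted \<phi> h \<epsilon> Pw F"

lemma F_nonpos: "t \<le> 0 \<Longrightarrow> F t = 0"
  using eq[of t] acc_nonpos[of t] by simp

lemma F_mono: "s \<le> t \<Longrightarrow> F s \<le> F t"
proof -
  assume st: "s \<le> t"
  have "card (acc s) \<le> card (acc t)"
    by (rule card_mono[OF fin acc_mono[OF st]])
  thus ?thesis by (simp only: eq[symmetric])
qed

lemma F_diff: "s \<le> t \<Longrightarrow> F t - F s = card (acc t - acc s)"
proof -
  assume st: "s \<le> t"
  have "card (acc t - acc s) = card (acc t) - card (acc s)"
    by (rule card_Diff_subset[OF fin acc_mono[OF st]])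
  thus ?thesis by (simp only: eq[symmetric])
qed

lemma F_rcont: "continuous (at_right a) (\<lambda>u. real (F u))"
proof -
  define S where "S = {s. \<exists>z. (s, z) \<in> acc (a+1) \<and> a < s}"
  have finS: "finite S"
  proof -
    have "S \<subseteq> fst ` acc (a+1)" unfolding S_def by force
    thus ?thesis using fin finite_surj by blast
  qed
  define d where "d = (if S = {} then 1 else Min S - a)"
  have dpos: "0 < d"
  proof (cases "S = {}")
    case False
    hence "Min S \<in> S" using finS by (intro Min_in) auto
    hence "a < Min S" unfolding S_def by blast
    thus ?thesis using False by (simp add: d_def)
  qed (simp add: d_def)
  have d1: "d \<le> 1"
  proof (cases "S = {}")
    case False
    then obtain s where "s \<in> S" by auto
    hence "Min S \<le> s" "s \<le> a + 1" using finS by (auto simp: S_def accepted_def)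
    thus ?thesis using False by (simp add: d_def)
  qed (simp add: d_def)
  have const: "F t = F a" if "a < t" "t < a + d" for t
  proof -
    have "acc t = acc a"
    proof (rule antisym)
      show "acc a \<subseteq> acc t" using that by (intro acc_mono) auto
      show "acc t \<subseteq> acc a"
      proof
        fix p assume p: "p \<in> acc t"
        obtain s z where pz: "p = (s, z)" by fastforce
        have "t \<le> a+1" using that d1 by auto
        hence "p \<in> acc (a+1)" using p acc_mono by blast
        moreover have "s \<le> t" using p pz by (auto simp: accepted_def)
        ultimately have "\<not> a < s"
        proof (intro notI)
          assume "p \<in> acc (a+1)" "s \<le> t" "a < s"
          hence "s \<in> S" using pz unfolding S_def by auto
          hence "S \<noteq> {}" "Min S \<le> s" using finS by auto
          thus False using that \<open>s \<le> t\<close> by (simp add: d_def)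
        qed
        thus "p \<in> acc a" using p pz acc_restrict[of a t] that by auto
      qed
    qed
    thus ?thesis using eq by simp
  qed
  have "((\<lambda>u. real (F u)) \<longlongrightarrow> real (F a)) (at_right a)"
  proof (rule tendsto_eventually)
    show "\<forall>\<^sub>F u in at_right a. real (F u) = real (F a)"
      unfolding eventually_at_right_field using dpos const by (intro exI[of _ "a+d"]) auto
  qed
  thus ?thesis by (simp add: continuous_within)
qed

lemma z_bound:
  assumes p: "(s, z) \<in> acc t" and tT: "t \<le> T" and e: "0 < \<epsilon>"
    and lip: "\<alpha>-lipschitz_on UNIV \<phi>" and hb: "\<And>x. x \<in> {0..T} \<Longrightarrow> \<bar>h x\<bar> \<le> H"
    and H: "0 \<le> H"
  shows "z \<le> \<phi> 0 / \<epsilon> + \<alpha> * H * real (F t)"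
proof -
  define I where "I = past_integral F (\<lambda>u. \<epsilon> * h (s - u)) s"
  have s: "0 < s" "s \<le> t" and zI: "z \<le> (1 / \<epsilon>) * \<phi> I"
    using p unfolding accepted_def I_def by auto
  have al: "0 \<le> \<alpha>" using lip by (simp add: lipschitz_on_nonneg)
  have "\<bar>I\<bar> \<le> (\<epsilon> * H) * real (F s)"
    unfolding I_def
  proof (rule past_integral_bound)
    show "\<And>x y. x \<le> y \<Longrightarrow> F x \<le> F y" by (rule F_mono)
    show "\<And>a. continuous (at_right a) (\<lambda>u. real (F u))" by (rule F_rcont)
    show "F 0 = 0" by (simp add: F_nonpos)
    show "0 < s" by fact
    show "0 \<le> \<epsilon> * H" using e H by simp
    fix u assume u: "u \<in> {0<..<s}"
    hence "s - u \<in> {0..T}" using s tT by auto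
    hence "\<bar>h (s - u)\<bar> \<le> H" by (rule hb)
    thus "\<bar>\<epsilon> * h (s - u)\<bar> \<le> \<epsilon> * H" using e by (simp add: abs_mult)
  qed
  also have "\<dots> \<le> (\<epsilon> * H) * real (F t)"
    using F_mono[OF s(2)] e H by (intro mult_left_mono) auto
  finally have Ib: "\<bar>I\<bar> \<le> \<epsilon> * H * real (F t)" .
  have "dist (\<phi> I) (\<phi> 0) \<le> \<alpha> * dist I 0"
    using lip by (rule lipschitz_onD) auto
  hence "\<phi> I \<le> \<phi> 0 + \<alpha> * \<bar>I\<bar>" by (simp add: dist_real_def)
  also have "\<dots> \<le> \<phi> 0 + \<alpha> * (\<epsilon> * H * real (F t))"
    using Ib al by (intro add_left_mono mult_left_mono) auto
  finally have "(1 / \<epsilon>) * \<phi> I \<le> (1 / \<epsilon>) * (\<phi> 0 + \<alpha> * (\<epsilon> * H * real (F t)))"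
    using e by (intro mult_left_mono) auto
  also have "\<dots> = \<phi> 0 / \<epsilon> + \<alpha> * H * real (F t)"
    using e by (simp add: field_simps)
  finally show ?thesis using zI by linarith
qed

end



lemma exp2_le8: "exp (2::real) \<le> 8"
proof -
  have "exp (2::real) = exp 1 * exp 1" by (simp add: exp_add[symmetric])
  also have "\<dots> \<le> (272/100) * (272/100)"
    using e_less_272 by (intro mult_mono) auto
  finally show ?thesis by simp
qed

lemma poisson_tail:
  assumes PRM: "poisson_random_measure M P"
    and A: "A \<in> sets lborel" "A \<subseteq> {0..} \<times> {0..}" "emeasure lborel A < \<infinity>"
    and mu: "measure lborel A \<le> real j / 8"
  shows "measure M {w \<in> space M. j \<le> card (P w \<inter> A)} \<le> exp (- real j)"
proof -
  interpret prob_space M using PRM by (simp add: poisson_random_measure_def)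
  define \<mu> where "\<mu> = measure lborel A"
  have \<mu>0: "0 \<le> \<mu>" by (simp add: \<mu>_def)
  have meas: "(\<lambda>w. card (P w \<inter> A)) \<in> measurable M (count_space UNIV)"
    and pk: "\<And>k. measure M {w \<in> space M. card (P w \<inter> A) = k} = \<mu> ^ k / fact k * exp (- \<mu>)"
    using PRM A unfolding poisson_random_measure_def \<mu>_def by blast+
  define E where "E i = {w \<in> space M. card (P w \<inter> A) = i + j}" for i
  have Esets: "E i \<in> sets M" for i
  proof -
    have "E i = (\<lambda>w. card (P w \<inter> A)) -` {i + j} \<inter> space M" unfolding E_def by auto
    thus ?thesis using measurable_sets[OF meas] by simp
  qed
  have Un: "{w \<in> space M. j \<le> card (P w \<inter> A)} = (\<Union>i. E i)"
    unfolding E_def by (auto dest: le_Suc_ex simp: add.commute)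
  have disj: "disjoint_family E" unfolding disjoint_family_on_def E_def by auto
  have s1: "(\<lambda>i. measure M (E i)) sums measure M (\<Union>i. E i)"
    using Esets disj by (intro measure_UNION) (auto simp: emeasure_eq_measure)
  define x where "x = exp 2 * \<mu>"
  define b where "b i = exp (- 2 * real j) * (x ^ (i + j) / fact (i + j))" for i
  have bs: "(\<lambda>i. x ^ (i + j) / fact (i + j)) sums (exp x - (\<Sum>i<j. x ^ i / fact i))"
    using exp_converges[of x] by (subst sums_iff_shift) (simp add: divide_inverse mult.commute)
  have x0: "0 \<le> x" using \<mu>0 by (simp add: x_def)
  have le: "measure M (E i) \<le> b i" for i
  proof -
    have "measure M (E i) = \<mu> ^ (i + j) / fact (i + j) * exp (- \<mu>)"
      unfolding E_def by (rule pk)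
    also have "\<dots> \<le> \<mu> ^ (i + j) / fact (i + j)"
      using \<mu>0 by (intro mult_left_le) auto
    also have "\<mu> ^ (i + j) = exp (- 2 * real (i + j)) * x ^ (i + j)"
      by (simp add: x_def power_mult_distrib exp_of_nat_mult[symmetric] exp_add[symmetric] mult.assoc[symmetric] exp_minus
        flip: exp_of_nat2_mult)
    also have "exp (- 2 * real (i + j)) \<le> exp (- 2 * real j)" by simp
    hence "exp (- 2 * real (i + j)) * x ^ (i + j) / fact (i + j) \<le> exp (- 2 * real j) * x ^ (i + j) / fact (i + j)"
      using x0 by (intro divide_right_mono mult_right_mono) auto
    finally show ?thesis by (simp add: b_def)
  qed
  have "measure M {w \<in> space M. j \<le> card (P w \<inter> A)} = (\<Sum>i. measure M (E i))"
    using s1 Un by (simp add: sums_iff)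
  also have "\<dots> \<le> (\<Sum>i. b i)"
    using s1 bs le unfolding b_def by (intro suminf_le summable_mult) (auto simp: sums_iff)
  also have "(\<Sum>i. b i) = exp (- 2 * real j) * (exp x - (\<Sum>i<j. x ^ i / fact i))"
    unfolding b_def by (rule sums_unique[symmetric, OF sums_mult[OF bs]])
  also have "\<dots> \<le> exp (- 2 * real j) * exp x"
    using x0 by (intro mult_left_mono) (auto intro!: sum_nonneg)
  also have "\<dots> = exp (- 2 * real j + x)" by (simp only: exp_add)
  also have "\<dots> \<le> exp (- real j)"
  proof -
    have "x \<le> 8 * \<mu>" unfolding x_def using exp2_le8 \<mu>0 by (intro mult_right_mono) auto
    thus ?thesis using mu by (simp add: \<mu>_def)
  qed
  finally show ?thesis .
qed




lemma box_props:
  fixes a b c :: real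
  assumes "0 \<le> a" "a \<le> b" "0 \<le> c"
  shows "{a<..b} \<times> {0..c} \<in> sets lborel" "{a<..b} \<times> {0..c} \<subseteq> {0..} \<times> {0..}"
    "emeasure lborel ({a<..b} \<times> {0..c}) < \<infinity>"
    "measure lborel ({a<..b} \<times> {0..c}) = (b - a) * c"
proof -
  have S: "{a<..b} \<times> {0..c} \<in> sets (lborel \<Otimes>\<^sub>M lborel)" by (intro pair_measureI) auto
  thus "{a<..b} \<times> {0..c} \<in> sets lborel" by (subst lborel_prod[symmetric])
  show "{a<..b} \<times> {0..c} \<subseteq> {0..} \<times> {0..}" using assms by auto
  have "emeasure lborel ({a<..b} \<times> {0..c}) = emeasure (lborel \<Otimes>\<^sub>M lborel) ({a<..b} \<times> {0..c})"
    by (simp add: lborel_prod)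
  also have "\<dots> = emeasure lborel {a<..b} * emeasure lborel {0..c}"
    by (intro lborel.emeasure_pair_measure_Times) auto
  also have "\<dots> = ennreal ((b - a) * c)" using assms by (simp add: ennreal_mult)
  finally have e: "emeasure lborel ({a<..b} \<times> {0..c}) = ennreal ((b - a) * c)" .
  thus "emeasure lborel ({a<..b} \<times> {0..c}) < \<infinity>" by simp
  show "measure lborel ({a<..b} \<times> {0..c}) = (b - a) * c"
    using e assms by (simp add: measure_def)
qed

lemma crossing:
  fixes f g :: "nat \<Rightarrow> real"
  assumes "f 0 \<le> g 0" "g n < f n"
  shows "\<exists>k<n. f k \<le> g k \<and> g (Suc k) < f (Suc k)"
  using assms
proof (induction n)
  case 0 thus ?case by simp
next
  case (Suc n)
  show ?case
  proof (cases "f n \<le> g n")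
    case True thus ?thesis using Suc.prems by auto
  next
    case False
    then obtain k where "k < n" "f k \<le> g k \<and> g (Suc k) < f (Suc k)" using Suc by force
    thus ?thesis by (intro exI[of _ k]) auto
  qed
qed





lemma main_bound:
  fixes \<Omega> :: "'a measure" and P :: "'a \<Rightarrow> (real \<times> real) set"
    and \<phi> h :: "real \<Rightarrow> real" and Ne :: "'a \<Rightarrow> real \<Rightarrow> nat" and n :: nat
  assumes PRM: "poisson_random_measure \<Omega> P"
    and lip: "\<alpha>-lipschitz_on UNIV \<phi>" and c0: "0 \<le> \<phi> 0"
    and hb: "\<And>x. x \<in> {0..T} \<Longrightarrow> \<bar>h x\<bar> \<le> H" and H: "0 \<le> H"
    and T: "0 < T" and n: "1 \<le> n"
    and small: "\<alpha> * H * (T / n) \<le> 1/32"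
    and Q: "16 * (T / n) * \<phi> 0 \<le> Q" "0 < Q"
    and e: "0 < \<epsilon>"
    and sol: "hawkes_solution \<Omega> P \<phi> h \<epsilon> Ne"
    and K: "(2^n - 1) * Q < K"
  shows "measure \<Omega> {w \<in> space \<Omega>. K \<le> \<epsilon> * real (Ne w T)}
           \<le> real n * (1 / (1 - exp (-1/2))) * exp (- Q / (2*\<epsilon>))"
proof -
  interpret prob_space \<Omega> using PRM by (simp add: poisson_random_measure_def)
  define c where "c = \<phi> 0"
  define \<beta> where "\<beta> = \<alpha> * H"
  define \<delta> where "\<delta> = T / n"
  define t where "t k = real k * \<delta>" for k :: nat
  define a where "a k = ((2::real)^k - 1) * Q / \<epsilon>" for k :: nat
  define D where "D k = a (Suc k) - a k" for k
  define Bx where "Bx k j = {t k<..t (Suc k)} \<times> {0 .. c/\<epsilon> + \<beta> * (a k + real j)}" for k j :: nat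
  define Bad where "Bad k j = (if D k < real j then {w \<in> space \<Omega>. j \<le> card (P w \<inter> Bx k j)} else {})" for k j
  define C where "C = 1 / (1 - exp (-1/2::real))"
  define E where "E = {w \<in> space \<Omega>. K \<le> \<epsilon> * real (Ne w T)}"
  define U where "U = (\<Union>k\<in>{..<n}. \<Union>j. Bad k j)"
  have al: "0 \<le> \<alpha>" using lip by (simp add: lipschitz_on_nonneg)
  have \<beta>0: "0 \<le> \<beta>" using al H by (simp add: \<beta>_def)
  have \<delta>0: "0 < \<delta>" using T n by (simp add: \<delta>_def)
  have \<beta>\<delta>: "\<beta> * \<delta> \<le> 1/32" using small by (simp add: \<beta>_def \<delta>_def)
  have t0: "0 \<le> t k" for k using \<delta>0 by (simp add: t_def)
  have tS: "t (Suc k) = t k + \<delta>" for k by (simp add: t_def algebra_simps)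
  have tn: "t n = T" using n by (simp add: t_def \<delta>_def)
  have tle: "k \<le> n \<Longrightarrow> t k \<le> T" for k
  proof -
    assume "k \<le> n"
    hence "real k * \<delta> \<le> real n * \<delta>" using \<delta>0 by (intro mult_right_mono) auto
    thus ?thesis using tn by (simp add: t_def)
  qed
  have a0: "0 \<le> a k" for k using Q e by (simp add: a_def)
  have Dk: "D k = (2::real)^k * Q / \<epsilon>" for k using e by (simp add: D_def a_def field_simps)
  have DQ: "Q / \<epsilon> \<le> D k" for k
    unfolding Dk using Q e by (simp add: divide_right_mono)
  have aD: "a k \<le> D k" for k
    unfolding Dk a_def using Q e by (simp add: divide_right_mono mult_right_mono)
  have c0': "0 \<le> c" using c0 by (simp add: c_def)
  have hgt: "0 \<le> c/\<epsilon> + \<beta> * (a k + real j)" for k j using c0' e \<beta>0 a0[of k] by simp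
  note bp = box_props[OF t0 _ hgt, of k "t (Suc k)" k j for k j]
  have tmono: "t k \<le> t (Suc k)" for k using tS \<delta>0 by simp
  have Bx_props: "Bx k j \<in> sets lborel" "Bx k j \<subseteq> {0..} \<times> {0..}" "emeasure lborel (Bx k j) < \<infinity>"
     "measure lborel (Bx k j) = \<delta> * (c/\<epsilon> + \<beta> * (a k + real j))" for k j
    using bp[OF tmono] unfolding Bx_def by (auto simp: tS)
  have meas: "(\<lambda>w. card (P w \<inter> Bx k j)) \<in> measurable \<Omega> (count_space UNIV)" for k j
    using PRM Bx_props[of k j] unfolding poisson_random_measure_def by blast
  have Bad_sets: "Bad k j \<in> sets \<Omega>" for k j
  proof -
    have "{w \<in> space \<Omega>. j \<le> card (P w \<inter> Bx k j)} = (\<lambda>w. card (P w \<inter> Bx k j)) -` {j..} \<inter> space \<Omega>"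
      by auto
    thus ?thesis using measurable_sets[OF meas[of k j]] by (simp add: Bad_def)
  qed
  have geo: "(\<lambda>j. exp (-1/2::real) ^ j) sums C"
    unfolding C_def by (rule geometric_sums) simp
  have Bad_le: "measure \<Omega> (Bad k j) \<le> exp (- Q / (2*\<epsilon>)) * exp (-1/2::real) ^ j" for k j
  proof (cases "D k < real j")
    case True
    have "measure lborel (Bx k j) \<le> real j / 8"
    proof -
      have j1: "\<delta> * (c / \<epsilon>) \<le> real j / 16"
      proof -
        have q1: "16 * \<delta> * c \<le> Q" using Q by (simp add: \<delta>_def c_def)
        have q2: "16 * \<delta> * c / \<epsilon> \<le> Q / \<epsilon>" using e by (intro divide_right_mono[OF q1]) simp
        have "\<delta> * (c / \<epsilon>) = (16 * \<delta> * c) / \<epsilon> / 16" by simp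
        also have "\<dots> \<le> Q / \<epsilon> / 16" using q2 by simp
        also have "\<dots> \<le> real j / 16" using DQ[of k] True by simp
        finally show ?thesis .
      qed
      have j2: "\<beta> * \<delta> * a k \<le> real j / 32"
        using mult_mono[OF \<beta>\<delta>, of "a k" "real j"] aD[of k] True a0[of k] \<beta>0 \<delta>0 by simp
      have j3: "\<beta> * \<delta> * real j \<le> real j / 32"
        using mult_right_mono[OF \<beta>\<delta>, of "real j"] by simp
      show ?thesis using j1 j2 j3 unfolding Bx_props(4) by (simp add: algebra_simps)
    qed
    hence "measure \<Omega> (Bad k j) \<le> exp (- real j)"
      using poisson_tail[OF PRM Bx_props(1-3)] True by (simp add: Bad_def)
    also have "\<dots> \<le> exp (- Q / (2*\<epsilon>)) * exp (-1/2::real) ^ j"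
    proof -
      have "Q / \<epsilon> < real j" using DQ[of k] True by linarith
      hence "- real j \<le> - Q / (2*\<epsilon>) + real j * (-1/2)" by (simp add: field_simps)
      thus ?thesis by (simp add: exp_add[symmetric] exp_of_nat_mult[symmetric])
    qed
    finally show ?thesis .
  next
    case False thus ?thesis by (simp add: Bad_def)
  qed
  have Bad_sum: "summable (\<lambda>j. measure \<Omega> (Bad k j))" for k
    by (rule summable_comparison_test'[where g="\<lambda>j. exp (- Q / (2*\<epsilon>)) * exp (-1/2::real) ^ j"])
       (use Bad_le geo in \<open>auto intro: summable_mult simp: sums_iff\<close>)
  have UB: "measure \<Omega> (\<Union>j. Bad k j) \<le> exp (- Q / (2*\<epsilon>)) * C" for k
  proof -
    have "measure \<Omega> (\<Union>j. Bad k j) \<le> (\<Sum>j. measure \<Omega> (Bad k j))"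
      using Bad_sets Bad_sum by (intro finite_measure_subadditive_countably) auto
    also have "\<dots> \<le> (\<Sum>j. exp (- Q / (2*\<epsilon>)) * exp (-1/2::real) ^ j)"
      using Bad_sum Bad_le sums_mult[OF geo] by (intro suminf_le) (auto simp: sums_iff)
    also have "\<dots> = exp (- Q / (2*\<epsilon>)) * C"
      using sums_mult[OF geo] by (simp add: sums_iff)
    finally show ?thesis .
  qed
  have U_sets: "U \<in> sets \<Omega>" unfolding U_def using Bad_sets by auto
  have mU: "measure \<Omega> U \<le> real n * C * exp (- Q / (2*\<epsilon>))"
  proof -
    have "measure \<Omega> U \<le> (\<Sum>k<n. measure \<Omega> (\<Union>j. Bad k j))"
      unfolding U_def using Bad_sets by (intro finite_measure_subadditive_finite) auto
    also have "\<dots> \<le> (\<Sum>k<n. exp (- Q / (2*\<epsilon>)) * C)" by (intro sum_mono UB)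
    also have "\<dots> = real n * C * exp (- Q / (2*\<epsilon>))" by simp
    finally show ?thesis .
  qed
  have AE1: "AE w in \<Omega>. good_path \<phi> h \<epsilon> (P w) (Ne w)"
    using sol unfolding hawkes_solution_def good_path_def by auto
  have AE2: "AE w in \<Omega>. \<forall>k j. finite (P w \<inter> Bx k j)"
    using PRM Bx_props unfolding poisson_random_measure_def by (auto simp: AE_all_countable)
  have AEU: "AE w in \<Omega>. w \<in> E \<longrightarrow> w \<in> U"
    using AE1 AE2
  proof eventually_elim
    case (elim w)
    show ?case
    proof
      assume wE: "w \<in> E"
      interpret g: good_path \<phi> h \<epsilon> "P w" "Ne w" by (rule elim(1))
      let ?F = "Ne w"
      have ws: "w \<in> space \<Omega>" using wE by (simp add: E_def)
      have "a n < real (?F (t n))"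
      proof -
        have "a n = ((2::real)^n - 1) * Q / \<epsilon>" by (simp add: a_def)
        also have "\<dots> < K / \<epsilon>" using K e by (simp add: divide_strict_right_mono)
        also have "\<dots> \<le> real (?F T)" using wE e by (simp add: E_def field_simps)
        finally show ?thesis using tn by simp
      qed
      moreover have "real (?F (t 0)) \<le> a 0" using g.F_nonpos by (simp add: t_def a_def)
      ultimately obtain k where k: "k < n" "real (?F (t k)) \<le> a k" "a (Suc k) < real (?F (t (Suc k)))"
        using crossing[of "\<lambda>k. real (?F (t k))" a n] by auto
      define j where "j = ?F (t (Suc k)) - ?F (t k)"
      have Fm: "?F (t k) \<le> ?F (t (Suc k))" by (rule g.F_mono[OF tmono])
      have rj: "real j = real (?F (t (Suc k))) - real (?F (t k))" using Fm by (simp add: j_def of_nat_diff)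
      have Dj: "D k < real j" using k rj by (simp add: D_def)
      have sub: "g.acc (t (Suc k)) - g.acc (t k) \<subseteq> P w \<inter> Bx k j"
      proof
        fix p assume p: "p \<in> g.acc (t (Suc k)) - g.acc (t k)"
        obtain s z where pz: "p = (s, z)" by fastforce
        have p1: "(s, z) \<in> g.acc (t (Suc k))" using p pz by simp
        have sk: "t k < s"
          using p pz acc_restrict[OF tmono[of k], of \<phi> h \<epsilon> "P w" "Ne w"] by auto
        have sk2: "s \<le> t (Suc k)" and pP: "(s, z) \<in> P w" using p1 by (auto simp: accepted_def)
        have z0: "0 \<le> z" using pP ws PRM unfolding poisson_random_measure_def by auto
        have "z \<le> \<phi> 0 / \<epsilon> + \<alpha> * H * real (?F (t (Suc k)))"
          by (rule g.z_bound[OF p1 tle e lip hb H]) (use k in auto)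
        also have "\<dots> \<le> c/\<epsilon> + \<beta> * (a k + real j)"
          using k(2) rj \<beta>0 by (simp add: c_def \<beta>_def[symmetric] mult_left_mono)
        finally show "p \<in> P w \<inter> Bx k j" using pz sk sk2 pP z0 by (simp add: Bx_def)
      qed
      have "j = card (g.acc (t (Suc k)) - g.acc (t k))"
        unfolding j_def by (rule g.F_diff[OF tmono])
      also have "\<dots> \<le> card (P w \<inter> Bx k j)"
        using sub elim(2) by (intro card_mono) auto
      finally have "w \<in> Bad k j" using Dj ws by (simp add: Bad_def)
      thus "w \<in> U" using k(1) by (auto simp: U_def)
    qed
  qed
  have "measure \<Omega> E \<le> measure \<Omega> U"
    using AEU U_sets by (intro finite_measure_mono_AE) (auto elim: AE_mp)
  also have "\<dots> \<le> real n * C * exp (- Q / (2*\<epsilon>))" by (rule mU)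
  finally show ?thesis by (simp add: E_def C_def)
qed




theorem lemma2p7:
  fixes M :: "'a measure" and P :: "'a \<Rightarrow> (real \<times> real) set"
    and \<phi> :: "real \<Rightarrow> real" and h :: "real \<Rightarrow> real"
    and \<alpha> T :: real and N :: "real \<Rightarrow> 'a \<Rightarrow> real \<Rightarrow> nat"
  assumes PRM: "poisson_random_measure M P"
    and T_pos: "0 < T"
    and phi_nonneg: "\<And>x. 0 \<le> \<phi> x"
    and alpha_pos: "0 < \<alpha>"
    and phi_lip: "\<alpha>-lipschitz_on UNIV \<phi>"
    and h_loc_int: "\<And>b. set_integrable lborel {0..b} h"
    and h_loc_bdd: "\<And>b. bounded (h ` {0..b})"
    and small: "\<alpha> * (LINT t:{0..T}|lborel. \<bar>h t\<bar>) < 1"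
    and sol: "\<And>\<epsilon>. 0 < \<epsilon> \<Longrightarrow> hawkes_solution M P \<phi> h \<epsilon> (N \<epsilon>)"
  shows "Limsup at_top (\<lambda>K::real. Limsup (at_right 0)
            (\<lambda>\<epsilon>. eps_log \<epsilon> (measure M {w \<in> space M. \<epsilon> * real (N \<epsilon> w T) \<ge> K})))
         = -\<infinity>"
proof (rule ereal_bot)
  fix L :: real
  obtain B0 where B0: "\<And>x. x \<in> {0..T} \<Longrightarrow> \<bar>h x\<bar> \<le> B0"
    using h_loc_bdd[of T] unfolding bounded_iff by (metis image_eqI real_norm_def)
  define H where "H = max B0 0"
  have hb: "\<And>x. x \<in> {0..T} \<Longrightarrow> \<bar>h x\<bar> \<le> H" using B0 by (force simp: H_def)
  have H0: "0 \<le> H" by (simp add: H_def)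
  define n where "n = nat \<lceil>32 * \<alpha> * H * T\<rceil> + 1"
  have n1: "1 \<le> n" by (simp add: n_def)
  have npos: "0 < real n" using n1 by simp
  have "32 * \<alpha> * H * T \<le> real n"
    using real_nat_ceiling_ge[of "32 * \<alpha> * H * T"] unfolding n_def by simp
  hence small': "\<alpha> * H * (T / n) \<le> 1/32" using npos by (simp add: field_simps)
  define Q where "Q = max (2 * (- L) + 2) (max (16 * (T / n) * \<phi> 0) 1)"
  have Q1: "16 * (T / n) * \<phi> 0 \<le> Q" "0 < Q" "2 * (- L) + 2 \<le> Q" by (auto simp: Q_def)
  define C0 where "C0 = real n * (1 / (1 - exp (-1/2::real)))"
  have C0: "0 < C0" using npos by (simp add: C0_def)
  define \<rho> where "\<rho> = 1 / (\<bar>ln C0\<bar> + 1)"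
  have \<rho>0: "0 < \<rho>" by (simp add: \<rho>_def)
  show "Limsup at_top (\<lambda>K::real. Limsup (at_right 0)
            (\<lambda>\<epsilon>. eps_log \<epsilon> (measure M {w \<in> space M. \<epsilon> * real (N \<epsilon> w T) \<ge> K}))) \<le> ereal L"
  proof (rule Limsup_bounded)
    show "\<forall>\<^sub>F K in at_top. Limsup (at_right 0)
            (\<lambda>\<epsilon>. eps_log \<epsilon> (measure M {w \<in> space M. \<epsilon> * real (N \<epsilon> w T) \<ge> K})) \<le> ereal L"
      using eventually_gt_at_top[of "(2^n - 1) * Q"]
    proof eventually_elim
      case (elim K)
      show ?case
      proof (rule Limsup_bounded)
        show "\<forall>\<^sub>F \<epsilon> in at_right 0. eps_log \<epsilon> (measure M {w \<in> space M. \<epsilon> * real (N \<epsilon> w T) \<ge> K}) \<le> ereal L"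
          unfolding eventually_at_right_field
        proof (intro exI[of _ \<rho>] conjI allI impI)
          show "0 < \<rho>" by (rule \<rho>0)
          fix \<epsilon> :: real assume e: "0 < \<epsilon>" "\<epsilon> < \<rho>"
          obtain p where pdef: "measure M {w \<in> space M. \<epsilon> * real (N \<epsilon> w T) \<ge> K} = p" by simp
          have pb: "p \<le> C0 * exp (- Q / (2*\<epsilon>))"
            unfolding pdef[symmetric] C0_def
            by (rule main_bound[OF PRM phi_lip phi_nonneg hb H0 T_pos n1 small' Q1(1,2) e(1) sol[OF e(1)] elim])
          show "eps_log \<epsilon> (measure M {w \<in> space M. \<epsilon> * real (N \<epsilon> w T) \<ge> K}) \<le> ereal L"
          proof (cases "p = 0")
            case True thus ?thesis using pdef by (simp add: eps_log_def)
          next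
            case False
            hence p0: "0 < p" using measure_nonneg[of M] pdef by (metis order_le_neq_trans)
            have "ln p \<le> ln (C0 * exp (- Q / (2*\<epsilon>)))" using p0 pb by simp
            also have "\<dots> = ln C0 - Q / (2*\<epsilon>)" using C0 by (simp add: ln_mult)
            finally have "\<epsilon> * ln p \<le> \<epsilon> * (ln C0 - Q / (2*\<epsilon>))" using e by (simp add: mult_left_mono)
            also have "\<dots> = \<epsilon> * ln C0 - Q / 2" using e by (simp add: field_simps)
            also have "\<epsilon> * ln C0 \<le> 1"
            proof -
              have "\<epsilon> * ln C0 \<le> \<epsilon> * \<bar>ln C0\<bar>" using e by (intro mult_left_mono) auto
              also have "\<dots> \<le> \<rho> * \<bar>ln C0\<bar>" using e by (intro mult_right_mono) auto
              also have "\<dots> \<le> 1" by (simp add: \<rho>_def field_simps)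
              finally show ?thesis .
            qed
            hence "\<epsilon> * ln C0 - Q / 2 \<le> L" using Q1(3) by linarith
            finally show ?thesis using False pdef by (simp add: eps_log_def)
          qed
        qed
      qed
    qed
  qed
qed


end
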